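(* Let $K$ be a field of characteristic $\neq 2$, $n\ge1$, and let $\mathcal C$ be any EACP over $K$. Then $\mathcal C$ is not unital, i.e. there is no $e\in\mathcal C$ with $ex=x=xe$ for all $x\in\mathcal C$.
   Context: An EACP over a field $K$ (characteristic $\neq 2$) is a $K$-algebra $\mathcal C$ with a basis $\{h_1,\dots,h_n,r\}$ (called a natural basis) whose multiplication is determined by bilinearity from $$h_ir=rh_i=\tfrac12\Big(\sum_{j=1}^n a_{ij}h_j+b_ir\Big),\qquad h_ih_j=0\ (i,j=1,\dots,n),\qquad rr=0,$$ for some constants $a_{ij},b_i\in K$. *)

theory Defs
  imports Main
begin

text \<open>Coordinate model of an EACP with natural basis h_1,...,h_n, r over a field 'a.
  Basis labels: Some i stands for h_i (1 \<le> i \<le> n), None stands for r.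
  An element of the algebra is its coordinate vector, a function from labels
  to 'a vanishing outside the basis labels.\<close>

definition eacp_basis :: "nat \<Rightarrow> nat option set" where
  "eacp_basis n = insert None (Some ` {1..n})"

definition eacp_carrier :: "nat \<Rightarrow> (nat option \<Rightarrow> 'a::zero) set" where
  "eacp_carrier n = {x. \<forall>k. k \<notin> eacp_basis n \<longrightarrow> x k = 0}"

text \<open>Structure constants: the product of two basis vectors, as a coordinate vector.
  h_i r = r h_i = (1/2)(sum_j a i j h_j + b i r), h_i h_j = 0, r r = 0.\<close>

definition eacp_table ::
  "(nat \<Rightarrow> nat \<Rightarrow> 'a::field) \<Rightarrow> (nat \<Rightarrow> 'a) \<Rightarrow> nat option \<Rightarrow> nat option \<Rightarrow> nat option \<Rightarrow> 'a" where
  "eacp_table a b p q k =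
     (case (p, q) of
        (Some i, None) \<Rightarrow> (case k of Some j \<Rightarrow> a i j / 2 | None \<Rightarrow> b i / 2)
      | (None, Some i) \<Rightarrow> (case k of Some j \<Rightarrow> a i j / 2 | None \<Rightarrow> b i / 2)
      | _ \<Rightarrow> 0)"

definition eacp_mult ::
  "nat \<Rightarrow> (nat \<Rightarrow> nat \<Rightarrow> 'a::field) \<Rightarrow> (nat \<Rightarrow> 'a) \<Rightarrow>
   (nat option \<Rightarrow> 'a) \<Rightarrow> (nat option \<Rightarrow> 'a) \<Rightarrow> (nat option \<Rightarrow> 'a)" where
  "eacp_mult n a b x y =
     (\<lambda>k. if k \<in> eacp_basis n
          then (\<Sum>p\<in>eacp_basis n. \<Sum>q\<in>eacp_basis n. x p * y q * eacp_table a b p q k)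
          else 0)"

end

theory Submission
  imports Defs
begin

definition ind :: "nat option \<Rightarrow> nat option \<Rightarrow> 'a::field" where
  "ind q0 = (\<lambda>k. if k = q0 then 1 else 0)"

lemma ind_carrier: "q0 \<in> eacp_basis n \<Longrightarrow> ind q0 \<in> eacp_carrier n"
  unfolding eacp_carrier_def ind_def by auto

lemma fin_basis: "finite (eacp_basis n)"
  unfolding eacp_basis_def by auto

lemma mult_ind:
  assumes "q0 \<in> eacp_basis n" "k \<in> eacp_basis n"
  shows "eacp_mult n a b x (ind q0) k = (\<Sum>p\<in>eacp_basis n. x p * eacp_table a b p q0 k)"
proof -
  have "\<And>p. (\<Sum>q\<in>eacp_basis n. x p * ind q0 q * eacp_table a b p q k) = x p * eacp_table a b p q0 k"
    using assms(1) fin_basis[of n]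
    by (simp add: ind_def if_distrib[where f="\<lambda>z. x _ * z * _"] sum.delta' cong: if_cong)
  then show ?thesis using assms(2) by (simp add: eacp_mult_def)
qed

lemma basis_split: "eacp_basis n = insert None (Some ` {1..n})" "None \<notin> Some ` {1..n}"
  unfolding eacp_basis_def by auto

lemma mult_h:
  assumes "i \<in> {1..n}" "k \<in> eacp_basis n"
  shows "eacp_mult n a b x (ind (Some i)) k = x None * eacp_table a b None (Some i) k"
proof -
  have "eacp_mult n a b x (ind (Some i)) k = (\<Sum>p\<in>eacp_basis n. x p * eacp_table a b p (Some i) k)"
    using assms by (intro mult_ind) (auto simp: eacp_basis_def)
  also have "\<dots> = x None * eacp_table a b None (Some i) k + (\<Sum>p\<in>Some ` {1..n}. x p * eacp_table a b p (Some i) k)"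
    by (simp add: basis_split)
  also have "(\<Sum>p\<in>Some ` {1..n}. x p * eacp_table a b p (Some i) k) = 0"
    by (rule sum.neutral) (auto simp: eacp_table_def)
  finally show ?thesis by simp
qed

lemma mult_r:
  "eacp_mult n a b x (ind None) None = (\<Sum>i\<in>{1..n}. x (Some i) * (b i / 2))"
proof -
  have "eacp_mult n a b x (ind None) None = (\<Sum>p\<in>eacp_basis n. x p * eacp_table a b p None None)"
    by (intro mult_ind) (auto simp: eacp_basis_def)
  also have "\<dots> = (\<Sum>p\<in>Some ` {1..n}. x p * eacp_table a b p None None)"
    by (simp add: basis_split eacp_table_def)
  also have "\<dots> = (\<Sum>i\<in>{1..n}. x (Some i) * (b i / 2))"
    by (simp add: sum.reindex eacp_table_def)
  finally show ?thesis .
qed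

theorem mainTheorem5:
  fixes n :: nat and a :: "nat \<Rightarrow> nat \<Rightarrow> 'a::field" and b :: "nat \<Rightarrow> 'a"
  assumes "(2::'a) \<noteq> 0" and "n \<ge> 1"
  shows "\<not> (\<exists>e \<in> eacp_carrier n. \<forall>x \<in> eacp_carrier n.
              eacp_mult n a b e x = x \<and> eacp_mult n a b x e = x)"
proof
  assume "\<exists>e \<in> eacp_carrier n. \<forall>x \<in> eacp_carrier n.
              eacp_mult n a b e x = x \<and> eacp_mult n a b x e = x"
  then obtain e where E: "\<And>x. x \<in> eacp_carrier n \<Longrightarrow> eacp_mult n a b e x = x" by blast
  have bi: "e None * b i = 0" if "i \<in> {1..n}" for i
  proof -
    have "eacp_mult n a b e (ind (Some i)) None = ind (Some i) None"
      using E[OF ind_carrier] that by (auto simp: eacp_basis_def)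
    moreover have "eacp_mult n a b e (ind (Some i)) None = e None * (b i / 2)"
      using mult_h[OF that, of None a b e] by (simp add: eacp_basis_def eacp_table_def)
    ultimately show ?thesis using assms(1) by (simp add: ind_def)
  qed
  have en: "e None \<noteq> 0"
  proof
    assume z: "e None = 0"
    have "eacp_mult n a b e (ind (Some 1)) (Some 1) = ind (Some 1) (Some 1)"
      using E[OF ind_carrier] assms(2) by (auto simp: eacp_basis_def)
    moreover have "eacp_mult n a b e (ind (Some 1)) (Some 1) = 0"
      using mult_h[of 1 n "Some 1" a b e] assms(2) z by (simp add: eacp_basis_def)
    ultimately show False by (simp add: ind_def)
  qed
  have b0: "b i = 0" if "i \<in> {1..n}" for i using bi[OF that] en by simp
  have "eacp_mult n a b e (ind None) None = ind None None"
    using E[OF ind_carrier] by (auto simp: eacp_basis_def)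
  moreover have "eacp_mult n a b e (ind None) None = 0"
    by (simp add: mult_r b0)
  ultimately show False by (simp add: ind_def)
qed

end
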